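(* Let $n\ge 3$ and let $G$ be a labeled star graph $K_{1,n-1}$ with vertex set $[n]$. Then $X(G;\mathbf{x},q)$ is palindromic if and only if $n$ is odd and the central vertex (the unique vertex of degree greater than $1$) is labeled $\frac{n+1}{2}$.
   Context: A labeled graph is a finite simple graph with vertex set $[n]$. A proper coloring is $c\colon[n]\to\{1,2,\dots\}$ with adjacent vertices colored differently; $\operatorname{asc}(c)=\#\{ij\in E: i<j,\ c(i)<c(j)\}$. The CQF is $X(G;\mathbf{x},q)=\sum_{c \text{ proper}} x_{c(1)}\cdots x_{c(n)}q^{\operatorname{asc}(c)}$. It is palindromic if, with $m=|E|$, the coefficient of $q^k$ (a quasisymmetric function) equals the coefficient of $q^{m-k}$ for every $k$. *)

theory Defs
  imports "HOL-Library.FuncSet"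
begin

definition labeled_graph :: "nat \<Rightarrow> nat set set \<Rightarrow> bool" where
  "labeled_graph n E \<longleftrightarrow> (\<forall>e\<in>E. e \<subseteq> {1..n} \<and> card e = 2)"

definition proper_colorings :: "nat \<Rightarrow> nat set set \<Rightarrow> (nat \<Rightarrow> nat) set" where
  "proper_colorings n E =
     {c \<in> {1..n} \<rightarrow>\<^sub>E {1..}. \<forall>e\<in>E. \<forall>i\<in>e. \<forall>j\<in>e. i \<noteq> j \<longrightarrow> c i \<noteq> c j}"

definition asc :: "nat set set \<Rightarrow> (nat \<Rightarrow> nat) \<Rightarrow> nat" where
  "asc E c = card {e\<in>E. \<exists>i j. e = {i, j} \<and> i < j \<and> c i < c j}"

text \<open>Coefficient of q^k x^alpha in X(G;x,q), where x^alpha = prod_j x_j^(alpha j):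
  the number of proper colorings with k ascents and content alpha.\<close>
definition cqf_coeff :: "nat \<Rightarrow> nat set set \<Rightarrow> nat \<Rightarrow> (nat \<Rightarrow> nat) \<Rightarrow> nat" where
  "cqf_coeff n E k \<alpha> =
     card {c \<in> proper_colorings n E. asc E c = k \<and> (\<forall>j. card {i\<in>{1..n}. c i = j} = \<alpha> j)}"

text \<open>Palindromicity: the coefficient of q^k equals that of q^(m-k), m = |E|, for 0 \<le> k \<le> m,
  as formal power series in x_1, x_2, ... (i.e. coefficientwise in every monomial).\<close>
definition cqf_palindromic :: "nat \<Rightarrow> nat set set \<Rightarrow> bool" where
  "cqf_palindromic n E \<longleftrightarrow>
     (\<forall>k\<le>card E. \<forall>\<alpha>. cqf_coeff n E k \<alpha> = cqf_coeff n E (card E - k) \<alpha>)"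

definition star_graph :: "nat \<Rightarrow> nat \<Rightarrow> nat set set" where
  "star_graph n v = {{v, u} | u. u \<in> {1..n} \<and> u \<noteq> v}"

end

theory Submission
  imports Defs
begin

lemma star_eq: "star_graph n v = (\<lambda>u. {v,u}) ` ({1..n}-{v})"
  unfolding star_graph_def by auto

lemma card_star: assumes "v \<in> {1..n}" shows "card (star_graph n v) = n - 1"
proof -
  have "inj_on (\<lambda>u. {v,u}) ({1..n}-{v})" by (auto simp: inj_on_def doubleton_eq_iff)
  then have "card (star_graph n v) = card ({1..n}-{v})" by (simp add: star_eq card_image)
  also have "\<dots> = n - 1" using assms by simp
  finally show ?thesis .
qed

lemma proper_star:
  "c \<in> proper_colorings n (star_graph n v) \<longleftrightarrow>
    c \<in> {1..n} \<rightarrow>\<^sub>E {1..} \<and> (\<forall>u\<in>{1..n}. u \<noteq> v \<longrightarrow> c u \<noteq> c v)"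
  unfolding proper_colorings_def star_eq by fastforce

definition ascset :: "nat \<Rightarrow> nat \<Rightarrow> (nat \<Rightarrow> nat) \<Rightarrow> nat set" where
  "ascset n v c = {u\<in>{1..n}. u \<noteq> v \<and> (u < v \<and> c u < c v \<or> v < u \<and> c v < c u)}"

lemma asc_star: assumes "v \<in> {1..n}"
  shows "asc (star_graph n v) c = card (ascset n v c)"
proof -
  have "{e\<in>star_graph n v. \<exists>i j. e = {i, j} \<and> i < j \<and> c i < c j} = (\<lambda>u. {v,u}) ` ascset n v c"
  proof (intro equalityI subsetI)
    fix e assume "e \<in> {e\<in>star_graph n v. \<exists>i j. e = {i, j} \<and> i < j \<and> c i < c j}"
    then obtain u i j where u: "u \<in> {1..n}" "u \<noteq> v" and e: "e = {v,u}" "e = {i,j}" "i < j" "c i < c j"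
      unfolding star_eq by blast
    then have "(i = v \<and> j = u) \<or> (i = u \<and> j = v)" by (auto simp: doubleton_eq_iff)
    then have "u \<in> ascset n v c" using u e unfolding ascset_def by auto
    then show "e \<in> (\<lambda>u. {v,u}) ` ascset n v c" using e by blast
  next
    fix e assume "e \<in> (\<lambda>u. {v,u}) ` ascset n v c"
    then obtain u where e: "e = {v,u}" and u: "u \<in> ascset n v c" by blast
    then have u1: "u \<in> {1..n} - {v}" unfolding ascset_def by blast
    have "\<exists>i j. e = {i, j} \<and> i < j \<and> c i < c j"
    proof (cases "u < v")
      case True then show ?thesis using u e unfolding ascset_def by (intro exI[of _ u] exI[of _ v]) auto
    next
      case False then show ?thesis using u e unfolding ascset_def by (intro exI[of _ v] exI[of _ u]) auto
    qed
    moreover have "e \<in> star_graph n v" unfolding star_eq using e u1 by blast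
    ultimately show "e \<in> {e\<in>star_graph n v. \<exists>i j. e = {i, j} \<and> i < j \<and> c i < c j}" by blast
  qed
  moreover have "inj_on (\<lambda>u. {v,u}) (ascset n v c)"
    by (auto simp: inj_on_def doubleton_eq_iff ascset_def)
  ultimately show ?thesis unfolding asc_def by (simp add: card_image)
qed

lemma card_reflect:
  "card {u\<in>{1..n}. P (n+1-u)} = card {u\<in>{1..(n::nat)}. P u}"
  by (rule bij_betw_same_card[of "\<lambda>u. n+1-u"], rule bij_betw_byWitness[where f'="\<lambda>u. n+1-u"]) auto

definition refl_col :: "nat \<Rightarrow> (nat \<Rightarrow> nat) \<Rightarrow> nat \<Rightarrow> nat" where
  "refl_col n c = restrict (\<lambda>i. c (n+1-i)) {1..n}"

lemma refl_proper:
  assumes "2*v = n+1" "c \<in> proper_colorings n (star_graph n v)"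
  shows "refl_col n c \<in> proper_colorings n (star_graph n v)"
proof -
  have pr: "c \<in> {1..n} \<rightarrow>\<^sub>E {1..}" "\<forall>u\<in>{1..n}. u \<noteq> v \<longrightarrow> c u \<noteq> c v"
    using assms(2) unfolding proper_star by auto
  have nv: "n+1-v = v" "v \<in> {1..n}" using assms(1) by auto
  have "refl_col n c \<in> {1..n} \<rightarrow>\<^sub>E {1..}"
  proof
    fix x assume x: "x \<in> {1..n}"
    then have "n+1-x \<in> {1..n}" by auto
    then show "refl_col n c x \<in> {1..}" using pr(1) x by (auto simp: refl_col_def PiE_iff)
  qed (auto simp: refl_col_def)
  moreover have "\<forall>u\<in>{1..n}. u \<noteq> v \<longrightarrow> refl_col n c u \<noteq> refl_col n c v"
  proof (intro ballI impI)
    fix u assume u: "u \<in> {1..n}" "u \<noteq> v"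
    then have "n+1-u \<in> {1..n}" "n+1-u \<noteq> v" using assms(1) by auto
    then have "c (n+1-u) \<noteq> c v" using pr(2) by blast
    then show "refl_col n c u \<noteq> refl_col n c v" using u nv by (simp add: refl_col_def)
  qed
  ultimately show ?thesis unfolding proper_star by blast
qed

lemma refl_refl:
  assumes "c \<in> {1..n} \<rightarrow>\<^sub>E {1..}"
  shows "refl_col n (refl_col n c) = c"
proof
  fix i show "refl_col n (refl_col n c) i = c i"
    using assms by (cases "i \<in> {1..n}") (auto simp: refl_col_def PiE_iff extensional_def)
qed

lemma refl_content:
  "card {i\<in>{1..n}. refl_col n c i = j} = card {i\<in>{1..n}. c i = j}"
proof -
  have "{i\<in>{1..n}. refl_col n c i = j} = {i\<in>{1..n}. c (n+1-i) = j}"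
    by (auto simp: refl_col_def)
  then show ?thesis using card_reflect[of n "\<lambda>w. c w = j"] by simp
qed

lemma refl_asc:
  assumes "2*v = n+1" "v \<in> {1..n}" "c \<in> proper_colorings n (star_graph n v)"
  shows "asc (star_graph n v) (refl_col n c) + asc (star_graph n v) c = n - 1"
proof -
  define Q where "Q w = (w \<noteq> v \<and> (v<w \<and> c w < c v \<or> w<v \<and> c v < c w))" for w
  have nv: "n+1-v = v" using assms(1) by simp
  have fv: "refl_col n c v = c v" using assms nv by (auto simp: refl_col_def)
  have "ascset n v (refl_col n c) = {u\<in>{1..n}. Q (n+1-u)}"
    unfolding ascset_def Q_def fv
    using assms(1) by (auto simp: refl_col_def)
  then have a1: "card (ascset n v (refl_col n c)) = card {u\<in>{1..n}. Q u}"
    using card_reflect[of n Q] by simp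
  have pr: "\<forall>u\<in>{1..n}. u \<noteq> v \<longrightarrow> c u \<noteq> c v"
    using assms(3) unfolding proper_star by blast
  have cov: "Q u \<or> u \<in> ascset n v c" if u: "u \<in> {1..n} - {v}" for u
  proof -
    have "c u \<noteq> c v" "u \<noteq> v" using u pr by auto
    then show ?thesis using u
      by (cases "u < v"; cases "c u < c v") (auto simp: Q_def ascset_def)
  qed
  have a2: "{u\<in>{1..n}. Q u} \<union> ascset n v c = {1..n} - {v}"
  proof
    show "{u\<in>{1..n}. Q u} \<union> ascset n v c \<subseteq> {1..n} - {v}"
      unfolding Q_def ascset_def by blast
    show "{1..n} - {v} \<subseteq> {u\<in>{1..n}. Q u} \<union> ascset n v c"
      using cov by blast
  qed
  have a3: "{u\<in>{1..n}. Q u} \<inter> ascset n v c = {}"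
    unfolding Q_def ascset_def by auto
  have "card (ascset n v (refl_col n c)) + card (ascset n v c) = card ({1..n} - {v})"
  proof -
    note a = a1 a2 a3
    have "finite (ascset n v c)" unfolding ascset_def by simp
    then have "card ({u\<in>{1..n}. Q u} \<union> ascset n v c) = card {u\<in>{1..n}. Q u} + card (ascset n v c)"
      using a(3) by (intro card_Un_disjoint) auto
    then show ?thesis using a by simp
  qed
  then show ?thesis using assms(2) by (simp add: asc_star)
qed

lemma pal_if:
  assumes "2*v = n+1" "v \<in> {1..n}"
  shows "cqf_palindromic n (star_graph n v)"
  unfolding cqf_palindromic_def
proof (intro allI impI)
  fix k \<alpha> assume k: "k \<le> card (star_graph n v)"
  let ?E = "star_graph n v"
  define A where "A k = {c \<in> proper_colorings n ?E. asc ?E c = k \<and> (\<forall>j. card {i\<in>{1..n}. c i = j} = \<alpha> j)}" for k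
  have cE: "card ?E = n - 1" using card_star assms(2) by simp
  have img: "refl_col n ` A k' \<subseteq> A (card ?E - k')" for k'
  proof
    fix d assume "d \<in> refl_col n ` A k'"
    then obtain c where d: "d = refl_col n c" and c: "c \<in> A k'" by blast
    have cp: "c \<in> proper_colorings n ?E" "asc ?E c = k'"
      "\<forall>j. card {i\<in>{1..n}. c i = j} = \<alpha> j" using c unfolding A_def by auto
    have s: "asc ?E d + k' = n - 1" using refl_asc[OF assms cp(1)] cp(2) d by simp
    have "asc ?E d = card ?E - k'" using s cE by simp
    moreover have "d \<in> proper_colorings n ?E" using refl_proper[OF assms(1) cp(1)] d by simp
    moreover have "\<forall>j. card {i\<in>{1..n}. d i = j} = \<alpha> j" using cp(3) d refl_content by simp
    ultimately show "d \<in> A (card ?E - k')" unfolding A_def by blast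
  qed
  have "bij_betw (refl_col n) (A k) (A (card ?E - k))"
  proof (rule bij_betw_byWitness[where f'="refl_col n"])
    show "\<forall>a\<in>A k. refl_col n (refl_col n a) = a"
      by (auto simp: A_def proper_colorings_def refl_refl)
    show "\<forall>a\<in>A (card ?E - k). refl_col n (refl_col n a) = a"
      by (auto simp: A_def proper_colorings_def refl_refl)
    show "refl_col n ` A k \<subseteq> A (card ?E - k)" by (rule img)
    have "card ?E - (card ?E - k) = k" using k by simp
    then show "refl_col n ` A (card ?E - k) \<subseteq> A k" using img[of "card ?E - k"] by simp
  qed
  then show "cqf_coeff n ?E k \<alpha> = cqf_coeff n ?E (card ?E - k) \<alpha>"
    unfolding cqf_coeff_def A_def by (rule bij_betw_same_card)
qed

definition c0 :: "nat \<Rightarrow> nat \<Rightarrow> nat \<Rightarrow> nat" where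
  "c0 n v = restrict (\<lambda>i. if i = v then 1 else 2) {1..n}"

definition a0 :: "nat \<Rightarrow> nat \<Rightarrow> nat" where
  "a0 n j = (if j = 1 then 1 else if j = 2 then n - 1 else 0)"

lemma c0_ok:
  assumes "v \<in> {1..n}"
  shows "c0 n v \<in> proper_colorings n (star_graph n v) \<and> (\<forall>j. card {i\<in>{1..n}. c0 n v i = j} = a0 n j)"
proof -
  have "card {i\<in>{1..n}. c0 n v i = j} = a0 n j" for j
  proof -
    have "j = 1 \<Longrightarrow> {i\<in>{1..n}. c0 n v i = j} = {v}" using assms by (auto simp: c0_def)
    moreover have "j = 2 \<Longrightarrow> {i\<in>{1..n}. c0 n v i = j} = {1..n} - {v}" by (auto simp: c0_def)
    moreover have "j \<noteq> 1 \<Longrightarrow> j \<noteq> 2 \<Longrightarrow> {i\<in>{1..n}. c0 n v i = j} = {}" by (auto simp: c0_def)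
    ultimately show ?thesis using assms by (auto simp: a0_def)
  qed
  moreover have "c0 n v \<in> proper_colorings n (star_graph n v)"
    using assms unfolding proper_star by (auto simp: c0_def)
  ultimately show ?thesis by blast
qed

lemma c0_uniq:
  assumes "n \<ge> 3" "v \<in> {1..n}" "c \<in> proper_colorings n (star_graph n v)"
    "\<forall>j. card {i\<in>{1..n}. c i = j} = a0 n j"
  shows "c = c0 n v"
proof -
  define S1 where "S1 = {i\<in>{1..n}. c i = 1}"
  define S2 where "S2 = {i\<in>{1..n}. c i = 2}"
  have c1: "card S1 = 1" using assms(4) unfolding S1_def by (metis a0_def)
  have c2: "card S2 = n - 1" using assms(4) unfolding S2_def by (metis a0_def numeral_eq_one_iff semiring_norm(85))
  have "card (S1 \<union> S2) = card S1 + card S2"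
    by (rule card_Un_disjoint) (auto simp: S1_def S2_def)
  then have "card (S1 \<union> S2) = card {1..n}" using c1 c2 assms(1) by simp
  moreover have "S1 \<union> S2 \<subseteq> {1..n}" by (auto simp: S1_def S2_def)
  ultimately have U: "S1 \<union> S2 = {1..n}" by (metis card_subset_eq finite_atLeastAtMost)
  have pr: "c \<in> {1..n} \<rightarrow>\<^sub>E {1..}" "\<forall>u\<in>{1..n}. u \<noteq> v \<longrightarrow> c u \<noteq> c v"
    using assms(3) unfolding proper_star by auto
  have in12: "i \<in> {1..n} \<Longrightarrow> c i = 1 \<or> c i = 2" for i using U unfolding S1_def S2_def by blast
  have cv: "c v = 1"
  proof (rule ccontr)
    assume "c v \<noteq> 1"
    then have "c v = 2" using in12 assms(2) by blast
    then have "{1..n} - {v} \<subseteq> S1" using in12 pr(2) unfolding S1_def by force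
    then have "card ({1..n} - {v}) \<le> card S1" by (intro card_mono) (auto simp: S1_def)
    then show False using c1 assms(1,2) by simp
  qed
  show ?thesis
  proof
    fix i show "c i = c0 n v i"
    proof (cases "i \<in> {1..n}")
      case True then show ?thesis using cv in12[of i] pr(2) by (auto simp: c0_def)
    next
      case False then show ?thesis using pr(1) by (auto simp: c0_def PiE_iff extensional_def)
    qed
  qed
qed

lemma asc_c0: assumes "v \<in> {1..n}" shows "asc (star_graph n v) (c0 n v) = n - v"
proof -
  have "ascset n v (c0 n v) = {v<..n}" using assms by (auto simp: ascset_def c0_def)
  then show ?thesis using asc_star[OF assms] by simp
qed

lemma coeff_a0:
  assumes "n \<ge> 3" "v \<in> {1..n}"
  shows "cqf_coeff n (star_graph n v) k (a0 n) = (if k = n - v then 1 else 0)"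
proof -
  have "{c \<in> proper_colorings n (star_graph n v). asc (star_graph n v) c = k \<and> (\<forall>j. card {i\<in>{1..n}. c i = j} = a0 n j)}
     = (if k = n - v then {c0 n v} else {})"
    using c0_uniq[OF assms] c0_ok[OF assms(2)] asc_c0[OF assms(2)] by auto
  then show ?thesis unfolding cqf_coeff_def by simp
qed

theorem proposition5p1:
  fixes n v :: nat
  assumes "n \<ge> 3" and "v \<in> {1..n}"
  shows "cqf_palindromic n (star_graph n v) \<longleftrightarrow> odd n \<and> v = (n + 1) div 2"
proof
  assume P: "cqf_palindromic n (star_graph n v)"
  have cE: "card (star_graph n v) = n - 1" using card_star assms(2) by simp
  have "v - 1 \<le> card (star_graph n v)" using cE assms(2) by (simp add: diff_le_mono)
  then have "cqf_coeff n (star_graph n v) (v - 1) (a0 n) = cqf_coeff n (star_graph n v) (card (star_graph n v) - (v - 1)) (a0 n)"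
    using P unfolding cqf_palindromic_def by blast
  moreover have "card (star_graph n v) - (v - 1) = n - v" using cE assms(2) by simp
  ultimately have e1: "cqf_coeff n (star_graph n v) (v - 1) (a0 n) = cqf_coeff n (star_graph n v) (n - v) (a0 n)"
    by simp
  have "cqf_coeff n (star_graph n v) (n - v) (a0 n) = 1" using coeff_a0[OF assms, of "n - v"] by simp
  then have "(if v - 1 = n - v then 1 else 0) = (1::nat)" using e1 coeff_a0[OF assms, of "v - 1"] by simp
  then have "v - 1 = n - v" by (cases "v - 1 = n - v") auto
  moreover have "1 \<le> v" "v \<le> n" using assms(2) by auto
  ultimately show "odd n \<and> v = (n + 1) div 2" by presburger
next
  assume "odd n \<and> v = (n + 1) div 2"
  then have "2 * v = n + 1" by presburger
  then show "cqf_palindromic n (star_graph n v)" using pal_if assms(2) by blast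
qed

end
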